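(* Let $\mathcal{A}=(Q,\gamma,W)$ be a one-dimensional pVASS. Every configuration of $\mathcal{A}$ can reach a configuration belonging to some region of $\mathcal{A}$ in at most $11|Q|^4$ transitions of $\mathcal{M}_\mathcal{A}$.
   Context: A pVASS of dimension $d\ge1$ is $\mathcal{A}=(Q,\gamma,W)$: $Q$ finite set of control states, $\gamma\subseteq Q\times\{-1,0,1\}^d\times Q$ rules, $W:\gamma\to\mathbb{N}^+$ weights. Standing assumption: the graph on $Q$ with an edge $p\to q$ iff some rule $(p,\kappa,q)$ exists is weakly connected, and for all $p,q$ at most one rule $(p,\kappa,q)$ exists. For $d=1$ configurations are $p(k)\in Q\times\mathbb{N}$. A rule $(p,\kappa,q)$ is enabled in $p(k)$ unless $\kappa=-1$ and $k=0$. The Markov chain $\mathcal{M}_\mathcal{A}$ on configurations: if no rule is enabled in $p(k)$ there is only the self-loop with probability 1; otherwise each enabled rule $(p,\kappa,q)$ of weight $\ell$ gives $p(k)\to q(k+\kappa)$ with probability $\ell/T$, $T$ the total weight of enabled rules. $\mathit{post}^*(X)$/$\mathit{pre}^*(X)$ are the sets of configurations reachable from / able to reach $X$. $\mathscr{C}_\mathcal{A}$ is the finite Markov chain on $Q$ with $p\to q$ with probability $W((p,\kappa,q))/T_p$ ($T_p$ total weight of rules with source $p$); BSCC = bottom strongly connected component. Regions: for $p\in Q$, the type I region determined by $p$ is $\mathit{post}^*(p(0))$ if this set is finite and contained in $\mathit{pre}^*(p(0))$, and $\emptyset$ otherwise. For $p$ in a BSCC $S$ of $\mathscr{C}_\mathcal{A}$,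 the type II region determined by $p$ is $\mathit{post}^*(p(0))$ if this set is infinite and contained in $\mathit{pre}^*(p(0))$, and $\emptyset$ otherwise. For a BSCC $S$, the type III region determined by $S$ is the set of all $p(k)$ with $p\in S$, $k\ge1$, that cannot reach any configuration with zero counter. Let $R_I(S)$, $R_{II}(S)$ be the unions of the type I, resp. type II, regions determined by states of $S$, and $D(S)=\big((S\times\mathbb{N})\cap\mathit{pre}^*(R_I(S))\big)\setminus\big(R_I(S)\cup\mathit{pre}^*(R_{II}(S))\big)$; the type IV region determined by $S$ is $D(S)$ if $D(S)$ is infinite and $\emptyset$ otherwise. A region of $\mathcal{A}$ is any of these sets. *)

theory Defs
  imports Complex_Main
begin

(* One-dimensional pVASS: control states Q, rules gamma (p, kappa, q) with kappa in {-1,0,1},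
   weights W.  Configurations p(k) are pairs (p, k) :: 'q * nat. *)

type_synonym 'q rule = "'q \<times> int \<times> 'q"
type_synonym 'q conf = "'q \<times> nat"

definition rule_graph :: "'q rule set \<Rightarrow> ('q \<times> 'q) set" where
  "rule_graph \<gamma> = {(p, q). \<exists>\<kappa>. (p, \<kappa>, q) \<in> \<gamma>}"

definition pVASS1 :: "'q set \<Rightarrow> 'q rule set \<Rightarrow> ('q rule \<Rightarrow> nat) \<Rightarrow> bool" where
  "pVASS1 Q \<gamma> W \<longleftrightarrow>
     finite Q \<and>
     \<gamma> \<subseteq> Q \<times> {-1, 0, 1} \<times> Q \<and>
     (\<forall>r\<in>\<gamma>. W r > 0) \<and>
     (\<forall>p\<in>Q. \<forall>q\<in>Q. (p, q) \<in> (rule_graph \<gamma> \<union> (rule_graph \<gamma>)\<inverse>)\<^sup>*) \<and>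
     (\<forall>p \<kappa> \<kappa>' q. (p, \<kappa>, q) \<in> \<gamma> \<longrightarrow> (p, \<kappa>', q) \<in> \<gamma> \<longrightarrow> \<kappa> = \<kappa>')"

definition enabled :: "'q rule \<Rightarrow> 'q conf \<Rightarrow> bool" where
  "enabled r c \<longleftrightarrow> (case r of (p', \<kappa>, q) \<Rightarrow> fst c = p' \<and> \<not> (\<kappa> = -1 \<and> snd c = 0))"

definition apply_rule :: "'q rule \<Rightarrow> 'q conf \<Rightarrow> 'q conf" where
  "apply_rule r c = (case r of (p', \<kappa>, q) \<Rightarrow> (q, nat (int (snd c) + \<kappa>)))"

definition enabled_rules :: "'q rule set \<Rightarrow> 'q conf \<Rightarrow> 'q rule set" where
  "enabled_rules \<gamma> c = {r \<in> \<gamma>. enabled r c}"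

definition MA_prob :: "'q rule set \<Rightarrow> ('q rule \<Rightarrow> nat) \<Rightarrow> 'q conf \<Rightarrow> 'q conf \<Rightarrow> real" where
  "MA_prob \<gamma> W c c' =
     (if enabled_rules \<gamma> c = {} then (if c' = c then 1 else 0)
      else (\<Sum>r\<in>{r \<in> enabled_rules \<gamma> c. apply_rule r c = c'}. real (W r))
           / (\<Sum>r\<in>enabled_rules \<gamma> c. real (W r)))"

definition MA_step :: "'q rule set \<Rightarrow> ('q rule \<Rightarrow> nat) \<Rightarrow> 'q conf \<Rightarrow> 'q conf \<Rightarrow> bool" where
  "MA_step \<gamma> W c c' \<longleftrightarrow> MA_prob \<gamma> W c c' > 0"

definition post_star :: "'q rule set \<Rightarrow> ('q rule \<Rightarrow> nat) \<Rightarrow> 'q conf set \<Rightarrow> 'q conf set" where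
  "post_star \<gamma> W X = {c'. \<exists>c\<in>X. (MA_step \<gamma> W)\<^sup>*\<^sup>* c c'}"

definition pre_star :: "'q rule set \<Rightarrow> ('q rule \<Rightarrow> nat) \<Rightarrow> 'q conf set \<Rightarrow> 'q conf set" where
  "pre_star \<gamma> W X = {c. \<exists>c'\<in>X. (MA_step \<gamma> W)\<^sup>*\<^sup>* c c'}"

definition CA_prob :: "'q set \<Rightarrow> 'q rule set \<Rightarrow> ('q rule \<Rightarrow> nat) \<Rightarrow> 'q \<Rightarrow> 'q \<Rightarrow> real" where
  "CA_prob Q \<gamma> W p q =
     (let out = {r \<in> \<gamma>. fst r = p} in
      if out = {} then (if q = p then 1 else 0)
      else (\<Sum>r\<in>{r \<in> out. snd (snd r) = q}. real (W r)) / (\<Sum>r\<in>out. real (W r)))"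

definition CA_edge :: "'q set \<Rightarrow> 'q rule set \<Rightarrow> ('q rule \<Rightarrow> nat) \<Rightarrow> ('q \<times> 'q) set" where
  "CA_edge Q \<gamma> W = {(p, q). p \<in> Q \<and> q \<in> Q \<and> CA_prob Q \<gamma> W p q > 0}"

definition BSCC :: "'q set \<Rightarrow> 'q rule set \<Rightarrow> ('q rule \<Rightarrow> nat) \<Rightarrow> 'q set \<Rightarrow> bool" where
  "BSCC Q \<gamma> W S \<longleftrightarrow> S \<noteq> {} \<and> S \<subseteq> Q \<and>
     (\<forall>p\<in>S. \<forall>q\<in>S. (p, q) \<in> (CA_edge Q \<gamma> W)\<^sup>*) \<and>
     (\<forall>p\<in>S. \<forall>q. (p, q) \<in> CA_edge Q \<gamma> W \<longrightarrow> q \<in> S)"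

definition region_I :: "'q rule set \<Rightarrow> ('q rule \<Rightarrow> nat) \<Rightarrow> 'q \<Rightarrow> 'q conf set" where
  "region_I \<gamma> W p =
     (if finite (post_star \<gamma> W {(p, 0)}) \<and> post_star \<gamma> W {(p, 0)} \<subseteq> pre_star \<gamma> W {(p, 0)}
      then post_star \<gamma> W {(p, 0)} else {})"

definition region_II :: "'q rule set \<Rightarrow> ('q rule \<Rightarrow> nat) \<Rightarrow> 'q \<Rightarrow> 'q conf set" where
  "region_II \<gamma> W p =
     (if infinite (post_star \<gamma> W {(p, 0)}) \<and> post_star \<gamma> W {(p, 0)} \<subseteq> pre_star \<gamma> W {(p, 0)}
      then post_star \<gamma> W {(p, 0)} else {})"

definition region_III :: "'q rule set \<Rightarrow> ('q rule \<Rightarrow> nat) \<Rightarrow> 'q set \<Rightarrow> 'q conf set" where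
  "region_III \<gamma> W S =
     {(p, k). p \<in> S \<and> k \<ge> 1 \<and> \<not> (\<exists>q. (MA_step \<gamma> W)\<^sup>*\<^sup>* (p, k) (q, 0))}"

definition R_I :: "'q rule set \<Rightarrow> ('q rule \<Rightarrow> nat) \<Rightarrow> 'q set \<Rightarrow> 'q conf set" where
  "R_I \<gamma> W S = (\<Union>p\<in>S. region_I \<gamma> W p)"

definition R_II :: "'q rule set \<Rightarrow> ('q rule \<Rightarrow> nat) \<Rightarrow> 'q set \<Rightarrow> 'q conf set" where
  "R_II \<gamma> W S = (\<Union>p\<in>S. region_II \<gamma> W p)"

definition D_set :: "'q rule set \<Rightarrow> ('q rule \<Rightarrow> nat) \<Rightarrow> 'q set \<Rightarrow> 'q conf set" where
  "D_set \<gamma> W S =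
     ((S \<times> UNIV) \<inter> pre_star \<gamma> W (R_I \<gamma> W S)) - (R_I \<gamma> W S \<union> pre_star \<gamma> W (R_II \<gamma> W S))"

definition region_IV :: "'q rule set \<Rightarrow> ('q rule \<Rightarrow> nat) \<Rightarrow> 'q set \<Rightarrow> 'q conf set" where
  "region_IV \<gamma> W S = (if infinite (D_set \<gamma> W S) then D_set \<gamma> W S else {})"

definition is_region :: "'q set \<Rightarrow> 'q rule set \<Rightarrow> ('q rule \<Rightarrow> nat) \<Rightarrow> 'q conf set \<Rightarrow> bool" where
  "is_region Q \<gamma> W R \<longleftrightarrow>
     (\<exists>p\<in>Q. R = region_I \<gamma> W p) \<or>
     (\<exists>S p. BSCC Q \<gamma> W S \<and> p \<in> S \<and> R = region_II \<gamma> W p) \<or>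
     (\<exists>S. BSCC Q \<gamma> W S \<and> R = region_III \<gamma> W S) \<or>
     (\<exists>S. BSCC Q \<gamma> W S \<and> R = region_IV \<gamma> W S)"

end

theory Submission
  imports Defs
begin


lemma path_prefix: "\<forall>i<n. P (f i) (f (Suc i)) \<Longrightarrow> i \<le> n \<Longrightarrow> (P ^^ i) (f 0) (f i)"
proof (induction i)
  case 0 then show ?case by simp
next
  case (Suc i) then show ?case by (meson Suc_le_lessD less_or_eq_imp_le relpowp_Suc_I)
qed

lemma short_path:
  assumes "(r ^^ m) x y" "finite X" "\<forall>z. r\<^sup>*\<^sup>* x z \<longrightarrow> z \<in> X"
  shows "\<exists>m' < card X. (r ^^ m') x y"
  using assms(1)
proof (induction m arbitrary: y rule: less_induct)
  case (less m)
  show ?case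
  proof (cases "m < card X")
    case True then show ?thesis using less.prems by blast
  next
    case False
    obtain f where f: "f 0 = x" "f m = y" "\<forall>i<m. r (f i) (f (Suc i))"
      using less.prems relpowp_fun_conv by metis
    have inX: "f ` {0..m} \<subseteq> X"
    proof
      fix z assume "z \<in> f ` {0..m}"
      then obtain i where "i \<le> m" "z = f i" by auto
      then have "(r ^^ i) x z" using path_prefix[of m r f i] f by auto
      then show "z \<in> X" using assms(3) relpowp_imp_rtranclp by metis
    qed
    have "\<not> inj_on f {0..m}"
    proof
      assume "inj_on f {0..m}"
      then have "card {0..m} \<le> card X" using card_inj_on_le[OF _ inX assms(2)] by blast
      then show False using False by simp
    qed
    then obtain i j where ij: "i \<le> m" "j \<le> m" "i \<noteq> j" "f i = f j"
      unfolding inj_on_def by auto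
    then obtain a b where ab: "a < b" "b \<le> m" "f a = f b"
      by (metis linorder_neqE_nat)
    define g where "g k = (if k \<le> a then f k else f (k + (b - a)))" for k
    have g: "g 0 = x" "g (m - (b - a)) = y" "\<forall>i<m - (b - a). r (g i) (g (Suc i))"
    proof -
      show "g 0 = x" using f by (simp add: g_def)
      show "g (m - (b - a)) = y"
      proof (cases "m - (b - a) \<le> a")
        case True then have "m = b" using ab by auto
        then show ?thesis using f ab by (auto simp: g_def)
      next
        case False then show ?thesis using f ab by (auto simp: g_def)
      qed
      show "\<forall>i<m - (b - a). r (g i) (g (Suc i))"
      proof (intro allI impI)
        fix i assume i: "i < m - (b - a)"
        show "r (g i) (g (Suc i))"
        proof (cases "i < a")
          case True then show ?thesis using f(3) ab i by (auto simp: g_def)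
        next
          case False
          then have "r (f (i + (b - a))) (f (Suc (i + (b - a))))" using f(3) ab i by auto
          moreover have "i = a \<Longrightarrow> f i = f (i + (b - a))" using ab by auto
          ultimately show ?thesis using False by (auto simp: g_def)
        qed
      qed
    qed
    have "(r ^^ (m - (b - a))) x y" using g relpowp_fun_conv by metis
    moreover have "m - (b - a) < m" using ab by auto
    ultimately show ?thesis using less.IH by blast
  qed
qed

lemma short_path_rt:
  assumes "r\<^sup>*\<^sup>* x y" "finite X" "\<forall>z. r\<^sup>*\<^sup>* x z \<longrightarrow> z \<in> X"
  shows "\<exists>m' < card X. (r ^^ m') x y"
  using assms short_path rtranclp_power by metis



locale pv =
  fixes Q :: "'q set" and \<gamma> :: "'q rule set" and W :: "'q rule \<Rightarrow> nat"
  assumes pv: "pVASS1 Q \<gamma> W"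
begin

abbreviation st where "st \<equiv> MA_step \<gamma> W"
definition zr where "zr c \<longleftrightarrow> (\<exists>q. st\<^sup>*\<^sup>* c (q, 0))"

lemma finQ: "finite Q" using pv unfolding pVASS1_def by auto
lemma rules_sub: "\<gamma> \<subseteq> Q \<times> {-1, 0, 1} \<times> Q" using pv unfolding pVASS1_def by auto
lemma Wpos: "r \<in> \<gamma> \<Longrightarrow> W r > 0" using pv unfolding pVASS1_def by auto
lemma fin_gamma: "finite \<gamma>"
  using rules_sub finQ by (meson finite_SigmaI finite.emptyI finite_insert rev_finite_subset)

lemma rule_in: "(p, \<kappa>, q) \<in> \<gamma> \<Longrightarrow> p \<in> Q \<and> q \<in> Q \<and> \<kappa> \<in> {-1,0,1}"
  using rules_sub by auto

lemma step_iff: "st c c' \<longleftrightarrow> (enabled_rules \<gamma> c = {} \<and> c' = c) \<or> (\<exists>r\<in>enabled_rules \<gamma> c. apply_rule r c = c')"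
proof -
  have fe: "finite (enabled_rules \<gamma> c)" using fin_gamma unfolding enabled_rules_def by auto
  have pos: "\<And>r. r \<in> enabled_rules \<gamma> c \<Longrightarrow> real (W r) > 0" using Wpos unfolding enabled_rules_def by auto
  show ?thesis
  proof (cases "enabled_rules \<gamma> c = {}")
    case True then show ?thesis unfolding MA_step_def MA_prob_def by auto
  next
    case False
    have den: "(\<Sum>r\<in>enabled_rules \<gamma> c. real (W r)) > 0"
      using False fe pos by (simp add: sum_pos)
    have "(\<Sum>r\<in>{r \<in> enabled_rules \<gamma> c. apply_rule r c = c'}. real (W r)) > 0 \<longleftrightarrow>
          (\<exists>r\<in>enabled_rules \<gamma> c. apply_rule r c = c')"
    proof
      assume "(\<Sum>r\<in>{r \<in> enabled_rules \<gamma> c. apply_rule r c = c'}. real (W r)) > 0"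
      then have "{r \<in> enabled_rules \<gamma> c. apply_rule r c = c'} \<noteq> {}" by (metis (no_types, lifting) less_irrefl sum.empty)
      then show "\<exists>r\<in>enabled_rules \<gamma> c. apply_rule r c = c'" by auto
    next
      assume "\<exists>r\<in>enabled_rules \<gamma> c. apply_rule r c = c'"
      then have ne: "{r \<in> enabled_rules \<gamma> c. apply_rule r c = c'} \<noteq> {}" by auto
      show "(\<Sum>r\<in>{r \<in> enabled_rules \<gamma> c. apply_rule r c = c'}. real (W r)) > 0"
        by (rule sum_pos) (use fe ne pos in auto)
    qed
    then show ?thesis using False den unfolding MA_step_def MA_prob_def
      by (simp add: divide_pos_pos zero_less_divide_iff)
  qed
qed

lemma step_rule: "(p, \<kappa>, q) \<in> \<gamma> \<Longrightarrow> \<not>(\<kappa> = -1 \<and> k = 0) \<Longrightarrow> st (p, k) (q, nat (int k + \<kappa>))"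
  unfolding step_iff enabled_rules_def enabled_def apply_rule_def
  by (rule disjI2, rule bexI[of _ "(p,\<kappa>,q)"]) auto

lemma step_self: "(\<forall>\<kappa> q. (p,\<kappa>,q) \<in> \<gamma> \<longrightarrow> \<kappa> = -1 \<and> k = 0) \<Longrightarrow> st (p, k) (p, k)"
  unfolding step_iff enabled_rules_def enabled_def by auto

lemma step_cases:
  assumes "st (p,k) (p',k')"
  shows "((p',k') = (p,k) \<and> (\<forall>\<kappa> q. (p,\<kappa>,q)\<in>\<gamma> \<longrightarrow> \<kappa> = -1 \<and> k = 0)) \<or>
         (\<exists>\<kappa>. (p,\<kappa>,p') \<in> \<gamma> \<and> \<not>(\<kappa>=-1 \<and> k=0) \<and> int k' = int k + \<kappa>)"
proof -
  from assms[unfolded step_iff] show ?thesis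
  proof
    assume "enabled_rules \<gamma> (p, k) = {} \<and> (p', k') = (p, k)"
    then show ?thesis unfolding enabled_rules_def enabled_def by auto
  next
    assume "\<exists>r\<in>enabled_rules \<gamma> (p, k). apply_rule r (p, k) = (p', k')"
    then obtain p0 \<kappa> q where r: "(p0,\<kappa>,q) \<in> \<gamma>" "enabled (p0,\<kappa>,q) (p,k)" "apply_rule (p0,\<kappa>,q) (p,k) = (p',k')"
      unfolding enabled_rules_def by auto
    then have "p0 = p" "\<not>(\<kappa>=-1 \<and> k=0)" "q = p'" "k' = nat (int k + \<kappa>)"
      unfolding enabled_def apply_rule_def by auto
    moreover have "\<kappa> \<in> {-1,0,1}" using rule_in r(1) by auto
    ultimately show ?thesis using r(1) by (intro disjI2 exI[of _ \<kappa>]) auto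
  qed
qed

lemma step_props:
  assumes "st c c'"
  shows "snd c' \<le> snd c + 1 \<and> snd c \<le> snd c' + 1 \<and> (fst c \<in> Q \<longrightarrow> fst c' \<in> Q)"
proof -
  obtain p k p' k' where c: "c = (p,k)" "c' = (p',k')" by fastforce
  show ?thesis using step_cases[OF assms[unfolded c]] rule_in unfolding c by fastforce
qed

lemma steps_Q: "st\<^sup>*\<^sup>* c c' \<Longrightarrow> fst c \<in> Q \<Longrightarrow> fst c' \<in> Q"
  by (induction rule: rtranclp_induct) (auto dest: step_props)

lemma steps_Q2: "st\<^sup>*\<^sup>* c (a,b) \<Longrightarrow> fst c \<in> Q \<Longrightarrow> a \<in> Q"
  using steps_Q[of c "(a,b)"] by simp


lemma zr_zero: "zr (q, 0)" unfolding zr_def by auto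
lemma zr_back: "st\<^sup>*\<^sup>* c d \<Longrightarrow> zr d \<Longrightarrow> zr c"
  unfolding zr_def by (meson rtranclp_trans)

lemma step_shift: "st (p,k) (p',k') \<Longrightarrow> st\<^sup>*\<^sup>* (p,k+t) (p',k'+t)"
proof -
  assume s: "st (p,k) (p',k')"
  from step_cases[OF s] show ?thesis
  proof
    assume "(p', k') = (p, k) \<and> (\<forall>\<kappa> q. (p, \<kappa>, q) \<in> \<gamma> \<longrightarrow> \<kappa> = - 1 \<and> k = 0)" then show ?thesis by auto
  next
    assume "\<exists>\<kappa>. (p, \<kappa>, p') \<in> \<gamma> \<and> \<not> (\<kappa> = - 1 \<and> k = 0) \<and> int k' = int k + \<kappa>"
    then obtain \<kappa> where k: "(p, \<kappa>, p') \<in> \<gamma>" "\<not> (\<kappa> = - 1 \<and> k = 0)" "int k' = int k + \<kappa>" by auto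
    have "\<not> (\<kappa> = - 1 \<and> k + t = 0)" using k(2) by auto
    then have "st (p, k+t) (p', nat (int (k+t) + \<kappa>))" using step_rule[OF k(1), of "k+t"] by blast
    moreover have "nat (int (k+t) + \<kappa>) = k' + t" using k(3) by auto
    ultimately show ?thesis by auto
  qed
qed

lemma steps_shift: "st\<^sup>*\<^sup>* c d \<Longrightarrow> st\<^sup>*\<^sup>* (fst c, snd c + t) (fst d, snd d + t)"
proof (induction rule: rtranclp_induct)
  case base then show ?case by simp
next
  case (step y z)
  have "st\<^sup>*\<^sup>* (fst y, snd y + t) (fst z, snd z + t)"
    using step_shift[of "fst y" "snd y" "fst z" "snd z" t] step(2) by auto
  then show ?case using step(3) by auto
qed

lemma steps_ivt: "st\<^sup>*\<^sup>* c d \<Longrightarrow> snd c \<le> l \<Longrightarrow> l \<le> snd d \<Longrightarrow> \<exists>x. st\<^sup>*\<^sup>* c x \<and> st\<^sup>*\<^sup>* x d \<and> snd x = l"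
proof (induction rule: rtranclp_induct)
  case base then show ?case by (intro exI[of _ c]) auto
next
  case (step y z)
  show ?case
  proof (cases "l \<le> snd y")
    case True
    then obtain x where "st\<^sup>*\<^sup>* c x" "st\<^sup>*\<^sup>* x y" "snd x = l" using step by auto
    then show ?thesis using step(2) by (intro exI[of _ x]) auto
  next
    case False
    then have "l = snd z" using step_props[OF step(2)] step(5) by auto
    then show ?thesis using step(1,2) by (intro exI[of _ z]) auto
  qed
qed

definition stg :: "nat \<Rightarrow> 'q conf \<Rightarrow> 'q conf \<Rightarrow> bool" where
  "stg l a b \<longleftrightarrow> st a b \<and> snd a > l"

lemma steps_fv: "st\<^sup>*\<^sup>* c d \<Longrightarrow> snd d \<le> l \<Longrightarrow> l \<le> snd c \<Longrightarrow>
  \<exists>x. (stg l)\<^sup>*\<^sup>* c x \<and> st\<^sup>*\<^sup>* x d \<and> snd x = l"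
proof (induction rule: converse_rtranclp_induct)
  case base then show ?case by (intro exI[of _ d]) auto
next
  case (step y z)
  show ?case
  proof (cases "snd y = l")
    case True then show ?thesis using step(1,2) by (intro exI[of _ y]) auto
  next
    case False
    then have "l \<le> snd z" using step_props[OF step(1)] step(5) by auto
    then obtain x where "(stg l)\<^sup>*\<^sup>* z x" "st\<^sup>*\<^sup>* x d" "snd x = l" using step by auto
    moreover have "stg l y z" using step(1) False step(5) unfolding stg_def by auto
    ultimately show ?thesis by (intro exI[of _ x]) (auto intro: converse_rtranclp_into_rtranclp)
  qed
qed

lemma step1_exec:
  assumes "st (u,a) (w,a')" "a \<ge> 1" "x \<ge> 1"
  shows "int x + int a' - int a \<ge> 0 \<and> st (u,x) (w, nat (int x + int a' - int a))"
proof -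
  from step_cases[OF assms(1)] show ?thesis
  proof
    assume h: "(w, a') = (u, a) \<and> (\<forall>\<kappa> q. (u, \<kappa>, q) \<in> \<gamma> \<longrightarrow> \<kappa> = - 1 \<and> a = 0)"
    then have "\<forall>\<kappa> q. (u, \<kappa>, q) \<notin> \<gamma>" using assms(2) by auto
    then have "st (u,x) (u,x)" using step_self by auto
    then show ?thesis using h by auto
  next
    assume "\<exists>\<kappa>. (u, \<kappa>, w) \<in> \<gamma> \<and> \<not> (\<kappa> = - 1 \<and> a = 0) \<and> int a' = int a + \<kappa>"
    then obtain \<kappa> where k: "(u, \<kappa>, w) \<in> \<gamma>" "int a' = int a + \<kappa>" by auto
    have "\<kappa> \<in> {-1,0,1}" using rule_in k(1) by auto
    then show ?thesis using step_rule[OF k(1), of x] assms(3) k(2) by auto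
  qed
qed

lemma steps1_exec:
  assumes "(stg 0)\<^sup>*\<^sup>* c d"
  shows "zr (fst c, x) \<or> (int x + int (snd d) - int (snd c) \<ge> 0 \<and> st\<^sup>*\<^sup>* (fst c, x) (fst d, nat (int x + int (snd d) - int (snd c))))"
  using assms
proof (induction arbitrary: x rule: converse_rtranclp_induct)
  case base then show ?case by auto
next
  case (step y z)
  show ?case
  proof (cases "x = 0")
    case True then show ?thesis using zr_zero by auto
  next
    case False
    have sy: "st (fst y, snd y) (fst z, snd z)" "snd y \<ge> 1" using step(1) unfolding stg_def by auto
    define x' where "x' = nat (int x + int (snd z) - int (snd y))"
    have e: "int x + int (snd z) - int (snd y) \<ge> 0" "st (fst y, x) (fst z, x')"
      using step1_exec[OF sy, of x] False unfolding x'_def by auto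
    from step(3)[of x'] show ?thesis
    proof
      assume "zr (fst z, x')" then show ?thesis using e(2) zr_back by blast
    next
      assume h: "0 \<le> int x' + int (snd d) - int (snd z) \<and> st\<^sup>*\<^sup>* (fst z, x') (fst d, nat (int x' + int (snd d) - int (snd z)))"
      have "int x' = int x + int (snd z) - int (snd y)" using e(1) unfolding x'_def by auto
      then have "nat (int x' + int (snd d) - int (snd z)) = nat (int x + int (snd d) - int (snd y))" by simp
      then show ?thesis using h e(2) \<open>int x' = _\<close> by (auto intro: converse_rtranclp_into_rtranclp)
    qed
  qed
qed


abbreviation E where "E \<equiv> CA_edge Q \<gamma> W"

lemma CA_edge_iff: "(p,q) \<in> E \<longleftrightarrow> p \<in> Q \<and> q \<in> Q \<and> ((\<exists>\<kappa>. (p,\<kappa>,q) \<in> \<gamma>) \<or> (q = p \<and> (\<forall>\<kappa> q'. (p,\<kappa>,q') \<notin> \<gamma>)))"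
proof -
  define out where "out = {r \<in> \<gamma>. fst r = p}"
  have fo: "finite out" using fin_gamma unfolding out_def by auto
  have pos: "\<And>r. r \<in> out \<Longrightarrow> real (W r) > 0" using Wpos unfolding out_def by auto
  show ?thesis
  proof (cases "out = {}")
    case True
    then have "\<forall>\<kappa> q'. (p,\<kappa>,q') \<notin> \<gamma>" unfolding out_def by force
    moreover have "CA_prob Q \<gamma> W p q = (if out = {} then (if q = p then 1 else 0) else (\<Sum>r\<in>{r \<in> out. snd (snd r) = q}. real (W r)) / (\<Sum>r\<in>out. real (W r)))"
      unfolding CA_prob_def Let_def out_def by (rule refl)
    then have "CA_prob Q \<gamma> W p q = (if q = p then 1 else 0)" using True by simp
    ultimately show ?thesis unfolding CA_edge_def by auto
  next
    case False
    then have ex: "\<exists>\<kappa> q'. (p,\<kappa>,q') \<in> \<gamma>" unfolding out_def by force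
    have den: "(\<Sum>r\<in>out. real (W r)) > 0" using False fo pos by (simp add: sum_pos)
    have "(\<Sum>r\<in>{r \<in> out. snd (snd r) = q}. real (W r)) > 0 \<longleftrightarrow> (\<exists>\<kappa>. (p,\<kappa>,q) \<in> \<gamma>)"
    proof
      assume "(\<Sum>r\<in>{r \<in> out. snd (snd r) = q}. real (W r)) > 0"
      then have "{r \<in> out. snd (snd r) = q} \<noteq> {}" by (metis (no_types, lifting) less_irrefl sum.empty)
      then show "\<exists>\<kappa>. (p,\<kappa>,q) \<in> \<gamma>" unfolding out_def by force
    next
      assume "\<exists>\<kappa>. (p,\<kappa>,q) \<in> \<gamma>"
      then have ne: "{r \<in> out. snd (snd r) = q} \<noteq> {}" unfolding out_def by force
      show "(\<Sum>r\<in>{r \<in> out. snd (snd r) = q}. real (W r)) > 0"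
        by (rule sum_pos) (use fo ne pos in auto)
    qed
    moreover have "CA_prob Q \<gamma> W p q = (if out = {} then (if q = p then 1 else 0) else (\<Sum>r\<in>{r \<in> out. snd (snd r) = q}. real (W r)) / (\<Sum>r\<in>out. real (W r)))"
      unfolding CA_prob_def Let_def out_def by (rule refl)
    then have "CA_prob Q \<gamma> W p q = (\<Sum>r\<in>{r \<in> out. snd (snd r) = q}. real (W r)) / (\<Sum>r\<in>out. real (W r))"
      using False by simp
    ultimately have "CA_prob Q \<gamma> W p q > 0 \<longleftrightarrow> (\<exists>\<kappa>. (p,\<kappa>,q) \<in> \<gamma>)"
      using den by (simp add: zero_less_divide_iff)
    then show ?thesis using ex unfolding CA_edge_def by auto
  qed
qed

lemma step_E: "st (p,k) (p',k') \<Longrightarrow> p \<in> Q \<Longrightarrow> p' = p \<or> (p,p') \<in> E"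
  using step_cases[of p k p' k'] rule_in CA_edge_iff by blast

lemma bscc_steps: "st\<^sup>*\<^sup>* c d \<Longrightarrow> BSCC Q \<gamma> W S \<Longrightarrow> fst c \<in> S \<Longrightarrow> fst d \<in> S"
proof (induction rule: rtranclp_induct)
  case base then show ?case by simp
next
  case (step y z)
  then have y: "fst y \<in> S" by auto
  moreover have "fst y \<in> Q" using y step.prems(1) unfolding BSCC_def by auto
  ultimately show ?case using step_E[of "fst y" "snd y" "fst z" "snd z"] step(2) step.prems(1)
    unfolding BSCC_def by auto
qed

lemma exec_ca: "(p,q) \<in> E\<^sup>* \<Longrightarrow> zr (p,k) \<or> (\<exists>k'. st\<^sup>*\<^sup>* (p,k) (q,k'))"
proof (induction arbitrary: k rule: converse_rtrancl_induct)
  case base then show ?case by auto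
next
  case (step y z)
  from step(1)[unfolded CA_edge_iff] show ?case
  proof (elim conjE disjE exE)
    fix \<kappa> assume r: "(y, \<kappa>, z) \<in> \<gamma>"
    show ?thesis
    proof (cases "\<kappa> = -1 \<and> k = 0")
      case True then show ?thesis using zr_zero by auto
    next
      case False
      then have s: "st (y,k) (z, nat (int k + \<kappa>))" using step_rule[OF r] by auto
      from step(3)[of "nat (int k + \<kappa>)"] show ?thesis
        using s zr_back by (meson converse_rtranclp_into_rtranclp r_into_rtranclp)
    qed
  next
    assume "z = y" "\<forall>\<kappa> q'. (y, \<kappa>, q') \<notin> \<gamma>"
    then show ?thesis using step(3)[of k] by auto
  qed
qed

lemma lift_ca: "((\<lambda>a b. (a,b) \<in> E) ^^ m) p q \<Longrightarrow> m \<le> k \<Longrightarrow> \<exists>k'. (st ^^ m) (p,k) (q,k') \<and> k \<le> k' + m"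
proof (induction m arbitrary: p k)
  case 0 then show ?case by auto
next
  case (Suc m)
  obtain y where y: "(p,y) \<in> E" "((\<lambda>a b. (a,b) \<in> E) ^^ m) y q" using relpowp_Suc_D2[OF Suc(2)] by auto
  from y(1)[unfolded CA_edge_iff] obtain k1 where k1: "st (p,k) (y,k1)" "k \<le> k1 + 1"
  proof (elim conjE disjE exE)
    fix \<kappa> assume r: "(p, \<kappa>, y) \<in> \<gamma>"
    have "\<kappa> \<in> {-1,0,1}" using rule_in r by auto
    moreover have "st (p,k) (y, nat (int k + \<kappa>))" using step_rule[OF r] Suc(3) by auto
    ultimately show thesis using that by force
  next
    assume "y = p" "\<forall>\<kappa> q'. (p, \<kappa>, q') \<notin> \<gamma>"
    then show thesis using that[of k] step_self by auto
  qed
  have "m \<le> k1" using Suc(3) k1(2) by auto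
  then obtain k' where "(st ^^ m) (y,k1) (q,k')" "k1 \<le> k' + m" using Suc(1)[OF y(2)] by blast
  then have "(st ^^ Suc m) (p,k) (q,k')" using k1 relpowp_Suc_I2 by metis
  then show ?case using k1 \<open>k1 \<le> k' + m\<close> by (intro exI[of _ k']) auto
qed

lemma bscc_exists: "p \<in> Q \<Longrightarrow> \<exists>S q. BSCC Q \<gamma> W S \<and> q \<in> S \<and> (p,q) \<in> E\<^sup>*"
proof -
  assume pQ: "p \<in> Q"
  define R where "R x = {y. (x,y) \<in> E\<^sup>*}" for x
  have RQ: "x \<in> Q \<Longrightarrow> R x \<subseteq> Q" for x
  proof
    fix y assume "x \<in> Q" "y \<in> R x"
    then have "(x,y) \<in> E\<^sup>*" unfolding R_def by auto
    then show "y \<in> Q" using \<open>x \<in> Q\<close> by (induction rule: rtrancl_induct) (auto simp: CA_edge_iff)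
  qed
  obtain q where q: "q \<in> R p" "\<forall>y. y \<in> R p \<longrightarrow> card (R q) \<le> card (R y)"
    using ex_has_least_nat[of "\<lambda>x. x \<in> R p" p "\<lambda>x. card (R x)"] unfolding R_def by auto
  have qQ: "q \<in> Q" using RQ[OF pQ] q(1) by auto
  have bk: "y \<in> R q \<Longrightarrow> q \<in> R y" for y
  proof -
    assume y: "y \<in> R q"
    then have sub: "R y \<subseteq> R q" unfolding R_def by auto
    have "y \<in> R p" using y q(1) unfolding R_def by auto
    then have "card (R q) \<le> card (R y)" using q(2) by auto
    moreover have "finite (R q)" using RQ[OF qQ] finQ finite_subset by auto
    ultimately have "R y = R q" using sub by (meson card_seteq)
    then show "q \<in> R y" unfolding R_def by auto
  qed
  have "BSCC Q \<gamma> W (R q)"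
    unfolding BSCC_def
  proof (intro conjI ballI allI impI)
    show "R q \<noteq> {}" unfolding R_def by auto
    show "R q \<subseteq> Q" using RQ[OF qQ] .
    fix a b assume "a \<in> R q" "b \<in> R q"
    then show "(a,b) \<in> E\<^sup>*" using bk unfolding R_def by (meson mem_Collect_eq rtrancl_trans)
  next
    fix a b assume "a \<in> R q" "(a,b) \<in> E"
    then show "b \<in> R q" unfolding R_def by auto
  qed
  moreover have "q \<in> R q" unfolding R_def by auto
  ultimately show ?thesis using q(1) unfolding R_def by auto
qed

lemma bscc_short: "p \<in> Q \<Longrightarrow> \<exists>S q m. BSCC Q \<gamma> W S \<and> q \<in> S \<and> m < card Q \<and> ((\<lambda>a b. (a,b) \<in> E) ^^ m) p q"
proof -
  assume pQ: "p \<in> Q"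
  obtain S q where S: "BSCC Q \<gamma> W S" "q \<in> S" "(p,q) \<in> E\<^sup>*" using bscc_exists[OF pQ] by auto
  have r: "(\<lambda>a b. (a,b) \<in> E)\<^sup>*\<^sup>* p q" using S(3) by (simp add: rtranclp_rtrancl_eq)
  have "\<forall>z. (\<lambda>a b. (a,b) \<in> E)\<^sup>*\<^sup>* p z \<longrightarrow> z \<in> Q"
  proof (intro allI impI)
    fix z assume "(\<lambda>a b. (a,b) \<in> E)\<^sup>*\<^sup>* p z"
    then show "z \<in> Q" using pQ by (induction rule: rtranclp_induct) (auto simp: CA_edge_iff)
  qed
  then obtain m where "m < card Q" "((\<lambda>a b. (a,b) \<in> E) ^^ m) p q" using short_path_rt[OF r finQ] by auto
  then show ?thesis using S by blast
qed


definition g :: "nat \<Rightarrow> 'q \<times> int \<Rightarrow> 'q \<times> int \<Rightarrow> bool" where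
  "g h a b \<longleftrightarrow> (\<exists>\<kappa>. (fst a, \<kappa>, fst b) \<in> \<gamma> \<and> snd b = (snd a + \<kappa>) mod int h)"

lemma proj: "st\<^sup>*\<^sup>* c d \<Longrightarrow> (g h)\<^sup>*\<^sup>* (fst c, int (snd c) mod int h) (fst d, int (snd d) mod int h)"
proof (induction rule: rtranclp_induct)
  case base then show ?case by simp
next
  case (step y z)
  obtain p k p' k' where yz: "y = (p,k)" "z = (p',k')" by fastforce
  from step_cases[of p k p' k'] step(2) yz
  have "(p',k') = (p,k) \<or> (\<exists>\<kappa>. (p,\<kappa>,p') \<in> \<gamma> \<and> int k' = int k + \<kappa>)" by blast
  then show ?case
  proof
    assume "(p',k') = (p,k)" then show ?thesis using step(3) yz by simp
  next
    assume "\<exists>\<kappa>. (p,\<kappa>,p') \<in> \<gamma> \<and> int k' = int k + \<kappa>"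
    then obtain \<kappa> where k: "(p,\<kappa>,p') \<in> \<gamma>" "int k' = int k + \<kappa>" by auto
    have "g h (p, int k mod int h) (p', int k' mod int h)" unfolding g_def using k
      by (auto simp: mod_add_left_eq)
    then show ?thesis using step(3) yz by (simp add: rtranclp.rtrancl_into_rtrancl)
  qed
qed

lemma lift_g: "(g h ^^ m) (p, int k mod int h) (p', i') \<Longrightarrow> m \<le> k \<Longrightarrow>
   \<exists>k'. (st ^^ m) (p,k) (p',k') \<and> int k' mod int h = i' \<and> k \<le> k' + m"
proof (induction m arbitrary: p k)
  case 0 then show ?case by auto
next
  case (Suc m)
  obtain y where y: "g h (p, int k mod int h) y" "(g h ^^ m) y (p', i')" using relpowp_Suc_D2[OF Suc(2)] by auto
  obtain p1 i1 where y1: "y = (p1,i1)" by fastforce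
  obtain \<kappa> where r: "(p,\<kappa>,p1) \<in> \<gamma>" "i1 = (int k mod int h + \<kappa>) mod int h" using y(1) y1 unfolding g_def by auto
  have kk: "\<kappa> \<in> {-1,0,1}" using rule_in r(1) by auto
  define k1 where "k1 = nat (int k + \<kappa>)"
  have s: "st (p,k) (p1,k1)" using step_rule[OF r(1), of k] Suc(3) unfolding k1_def by auto
  have "int k1 = int k + \<kappa>" using kk Suc(3) unfolding k1_def by auto
  then have "int k1 mod int h = i1" using r(2) by (simp add: mod_add_left_eq)
  moreover have "m \<le> k1" using \<open>int k1 = _\<close> kk Suc(3) by auto
  ultimately obtain k' where k': "(st ^^ m) (p1,k1) (p',k')" "int k' mod int h = i'" "k1 \<le> k' + m"
    using Suc(1)[of p1 k1] y(2) y1 by auto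
  have "(st ^^ Suc m) (p,k) (p',k')" using s k'(1) relpowp_Suc_I2 by metis
  then show ?case using k' \<open>int k1 = _\<close> kk by (intro exI[of _ k']) auto
qed

lemma prod_reach:
  assumes "st\<^sup>*\<^sup>* (q,j1) (u,a1)" "h \<ge> 1" "q \<in> Q" "int j2 mod int h = int j1 mod int h" "card Q * h \<le> j2"
  shows "\<exists>m < card Q * h. \<exists>x. (st ^^ m) (q,j2) (u,x) \<and> int x mod int h = int a1 mod int h \<and> j2 \<le> x + m"
proof -
  have r: "(g h)\<^sup>*\<^sup>* (q, int j2 mod int h) (u, int a1 mod int h)" using proj[OF assms(1), of h] assms(4) by simp
  define X where "X = Q \<times> {0..<int h}"
  have fX: "finite X" using finQ unfolding X_def by auto
  have cX: "card X = card Q * h" unfolding X_def by (simp add: card_cartesian_product)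
  have inX: "\<forall>z. (g h)\<^sup>*\<^sup>* (q, int j2 mod int h) z \<longrightarrow> z \<in> X"
  proof (intro allI impI)
    fix z assume "(g h)\<^sup>*\<^sup>* (q, int j2 mod int h) z"
    then show "z \<in> X"
    proof (induction rule: rtranclp_induct)
      case base then show ?case using assms(2,3) unfolding X_def by auto
    next
      case (step y z)
      then obtain \<kappa> where k: "(fst y, \<kappa>, fst z) \<in> \<gamma>" "snd z = (snd y + \<kappa>) mod int h" unfolding g_def by blast
      have "fst z \<in> Q" using rule_in[OF k(1)] by blast
      moreover have "snd z \<in> {0..<int h}" using k(2) assms(2) by simp
      ultimately show ?case unfolding X_def by (simp add: mem_Times_iff)
    qed
  qed
  obtain m where m: "m < card Q * h" "(g h ^^ m) (q, int j2 mod int h) (u, int a1 mod int h)"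
    using short_path_rt[OF r fX inX] cX by auto
  then obtain x where "(st ^^ m) (q,j2) (u,x)" "int x mod int h = int a1 mod int h" "j2 \<le> x + m"
    using lift_g[OF m(2)] assms(5) by fastforce
  then show ?thesis using m(1) by blast
qed


definition recz where "recz z \<longleftrightarrow> (\<forall>d. st\<^sup>*\<^sup>* z d \<longrightarrow> st\<^sup>*\<^sup>* d z)"

lemma pump_iter: "st\<^sup>*\<^sup>* (u,a) (u,a+h) \<Longrightarrow> st\<^sup>*\<^sup>* (u,a) (u, a + r*h)"
proof (induction r)
  case 0 then show ?case by simp
next
  case (Suc r)
  have "st\<^sup>*\<^sup>* (u, a + r*h) (u, a + h + r*h)" using steps_shift[OF Suc.prems, of "r*h"] by simp
  then have "st\<^sup>*\<^sup>* (u,a) (u, a + h + r*h)" using Suc.IH[OF Suc.prems] by (meson rtranclp_trans)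
  then show ?case by (simp add: algebra_simps)
qed

lemma uppump:
  assumes "recz z" "fst z \<in> Q" "st\<^sup>*\<^sup>* z y" "snd y \<ge> card Q" "snd z = 0"
  shows "\<exists>u a h. 1 \<le> h \<and> a + h \<le> card Q \<and> st\<^sup>*\<^sup>* z (u,a) \<and> st\<^sup>*\<^sup>* (u,a) (u, a+h)"
proof -
  have "\<forall>l\<in>{0..card Q}. \<exists>x. st\<^sup>*\<^sup>* z x \<and> st\<^sup>*\<^sup>* x y \<and> snd x = l"
    using steps_ivt[OF assms(3)] assms(4,5) by auto
  then obtain X where X: "\<forall>l\<in>{0..card Q}. st\<^sup>*\<^sup>* z (X l) \<and> st\<^sup>*\<^sup>* (X l) y \<and> snd (X l) = l"
    by metis
  have img: "(fst \<circ> X) ` {0..card Q} \<subseteq> Q"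
  proof
    fix v assume "v \<in> (fst \<circ> X) ` {0..card Q}"
    then obtain l where "l \<in> {0..card Q}" "v = fst (X l)" by auto
    then show "v \<in> Q" using X steps_Q[of z "X l"] assms(2) by auto
  qed
  have "\<not> inj_on (fst \<circ> X) {0..card Q}"
  proof
    assume "inj_on (fst \<circ> X) {0..card Q}"
    then have "card {0..card Q} \<le> card Q" using card_inj_on_le[OF _ img finQ] by blast
    then show False by simp
  qed
  then obtain l1 l2 where l: "l1 \<in> {0..card Q}" "l2 \<in> {0..card Q}" "l1 < l2" "fst (X l1) = fst (X l2)"
    unfolding inj_on_def by (metis comp_apply linorder_neqE_nat)
  define u where "u = fst (X l1)"
  have x1: "X l1 = (u, l1)" using X l(1) unfolding u_def by (metis prod.collapse)
  have x2: "X l2 = (u, l2)" using X l(2) l(4) unfolding u_def by (metis prod.collapse)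
  have "st\<^sup>*\<^sup>* (X l1) (X l2)"
    using X l(1,2) assms(1,3) unfolding recz_def by (meson rtranclp_trans)
  then have "st\<^sup>*\<^sup>* (u,l1) (u, l1 + (l2 - l1))" using x1 x2 l(3) by simp
  moreover have "st\<^sup>*\<^sup>* z (u,l1)" using X l(1) x1 by metis
  moreover have "l1 + (l2 - l1) \<le> card Q" "1 \<le> l2 - l1" using l by auto
  ultimately show ?thesis by blast
qed

lemma post_infinite_of_pump:
  assumes "st\<^sup>*\<^sup>* z (u,a)" "st\<^sup>*\<^sup>* (u,a) (u, a+h)" "h \<ge> 1"
  shows "infinite (post_star \<gamma> W {z})"
proof
  assume fin: "finite (post_star \<gamma> W {z})"
  have "range (\<lambda>r. (u, a + r*h)) \<subseteq> post_star \<gamma> W {z}"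
    using pump_iter[OF assms(2)] assms(1) unfolding post_star_def by (auto intro: rtranclp_trans)
  moreover have "inj (\<lambda>r. (u, a + r*h))" using assms(3) unfolding inj_def by auto
  ultimately show False using fin by (meson finite_imageD finite_subset infinite_UNIV_nat)
qed

lemma rec_finite_bound:
  assumes "recz z" "fst z \<in> Q" "snd z = 0" "finite (post_star \<gamma> W {z})" "st\<^sup>*\<^sup>* z y"
  shows "snd y < card Q"
proof (rule ccontr)
  assume "\<not> snd y < card Q"
  then obtain u a h where "1 \<le> h" "st\<^sup>*\<^sup>* z (u,a)" "st\<^sup>*\<^sup>* (u,a) (u, a+h)"
    using uppump[OF assms(1,2,5) _ assms(3)] by auto
  then show False using post_infinite_of_pump assms(4) by blast
qed

lemma infinite_high:
  assumes "infinite (post_star \<gamma> W {z})" "fst z \<in> Q"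
  shows "\<exists>y. st\<^sup>*\<^sup>* z y \<and> snd y \<ge> card Q"
proof (rule ccontr)
  assume "\<not> ?thesis"
  then have "post_star \<gamma> W {z} \<subseteq> Q \<times> {0..<card Q}"
    using steps_Q2 assms(2) unfolding post_star_def by (fastforce simp: mem_Times_iff not_le)
  then show False using assms(1) finQ by (meson finite_SigmaI finite_atLeastLessThan finite_subset)
qed

lemma bottom:
  assumes "zr c" "fst c \<in> Q"
  shows "\<exists>z. snd z = 0 \<and> st\<^sup>*\<^sup>* c z \<and> (\<forall>z'. snd z' = 0 \<longrightarrow> st\<^sup>*\<^sup>* z z' \<longrightarrow> st\<^sup>*\<^sup>* z' z)"
proof -
  define Z where "Z x = {z. snd z = 0 \<and> st\<^sup>*\<^sup>* x z}" for x
  have finZ: "fst x \<in> Q \<Longrightarrow> finite (Z x)" for x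
  proof -
    assume "fst x \<in> Q"
    then have "Z x \<subseteq> Q \<times> {0}" using steps_Q2 unfolding Z_def by (fastforce simp: mem_Times_iff)
    then show ?thesis using finQ by (meson finite.emptyI finite_SigmaI finite_insert finite_subset)
  qed
  obtain z0 where "z0 \<in> Z c" using assms(1) unfolding zr_def Z_def by auto
  then obtain z where z: "z \<in> Z c" "\<forall>y. y \<in> Z c \<longrightarrow> card (Z z) \<le> card (Z y)"
    using ex_has_least_nat[of "\<lambda>x. x \<in> Z c" z0 "\<lambda>x. card (Z x)"] by auto
  have zQ: "fst z \<in> Q" using z(1) steps_Q[of c z] assms(2) unfolding Z_def by auto
  have "\<forall>z'. snd z' = 0 \<longrightarrow> st\<^sup>*\<^sup>* z z' \<longrightarrow> st\<^sup>*\<^sup>* z' z"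
  proof (intro allI impI)
    fix z' assume z': "snd z' = 0" "st\<^sup>*\<^sup>* z z'"
    have sub: "Z z' \<subseteq> Z z" using z' unfolding Z_def by (auto intro: rtranclp_trans)
    have "z' \<in> Z c" using z(1) z' unfolding Z_def by (auto intro: rtranclp_trans)
    then have "card (Z z) \<le> card (Z z')" using z(2) by blast
    then have "Z z' = Z z" using sub finZ[OF zQ] by (meson card_seteq)
    moreover have "z \<in> Z z" using z(1) unfolding Z_def by auto
    ultimately show "st\<^sup>*\<^sup>* z' z" unfolding Z_def by auto
  qed
  then show ?thesis using z(1) unfolding Z_def by (intro exI[of _ z]) auto
qed


lemma stg_mono: "(stg l)\<^sup>*\<^sup>* a b \<Longrightarrow> (stg 0)\<^sup>*\<^sup>* a b"
proof -
  assume "(stg l)\<^sup>*\<^sup>* a b"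
  then show ?thesis by (rule rtranclp_mono[THEN predicate2D, rotated]) (auto simp: stg_def)
qed

lemma stg_st: "(stg l)\<^sup>*\<^sup>* a b \<Longrightarrow> st\<^sup>*\<^sup>* a b"
proof -
  assume "(stg l)\<^sup>*\<^sup>* a b"
  then show ?thesis by (rule rtranclp_mono[THEN predicate2D, rotated]) (auto simp: stg_def)
qed

lemma negcycle_zr: "(stg 0)\<^sup>*\<^sup>* (u, a) (u, b) \<Longrightarrow> b < a \<Longrightarrow> zr (u,x)"
proof (induction x rule: less_induct)
  case (less x)
  from steps1_exec[OF less.prems(1), of x] show ?case
  proof
    assume "zr (fst (u, a), x)" then show ?thesis by simp
  next
    assume h: "0 \<le> int x + int (snd (u, b)) - int (snd (u, a)) \<and>
      st\<^sup>*\<^sup>* (fst (u, a), x) (fst (u, b), nat (int x + int (snd (u, b)) - int (snd (u, a))))"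
    define x' where "x' = nat (int x + int b - int a)"
    have "x' < x" using h less.prems(2) unfolding x'_def by auto
    then have "zr (u,x')" using less.IH less.prems by blast
    moreover have "st\<^sup>*\<^sup>* (u,x) (u,x')" using h unfolding x'_def by simp
    ultimately show ?thesis using zr_back by blast
  qed
qed

lemma chain_ex:
  assumes "st\<^sup>*\<^sup>* (q,j) d" "snd d = 0"
  shows "i \<le> j \<Longrightarrow> \<exists>f. f 0 = (q,j) \<and> (\<forall>t\<le>i. snd (f t) = j - t \<and> st\<^sup>*\<^sup>* (f t) d) \<and> (\<forall>t<i. (stg 0)\<^sup>*\<^sup>* (f t) (f (Suc t)))"
proof (induction i)
  case 0 then show ?case using assms by (intro exI[of _ "\<lambda>_. (q,j)"]) auto
next
  case (Suc i)
  then obtain f where f: "f 0 = (q,j)" "\<forall>t\<le>i. snd (f t) = j - t \<and> st\<^sup>*\<^sup>* (f t) d" "\<forall>t<i. (stg 0)\<^sup>*\<^sup>* (f t) (f (Suc t))"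
    by auto
  have fi: "snd (f i) = j - i" "st\<^sup>*\<^sup>* (f i) d" using f(2) by auto
  have "\<exists>x. (stg (j - Suc i))\<^sup>*\<^sup>* (f i) x \<and> st\<^sup>*\<^sup>* x d \<and> snd x = j - Suc i"
    by (rule steps_fv[OF fi(2)]) (use fi(1) assms(2) Suc.prems in auto)
  then obtain x where x: "(stg (j - Suc i))\<^sup>*\<^sup>* (f i) x" "st\<^sup>*\<^sup>* x d" "snd x = j - Suc i"
    by blast
  define f' where "f' = f(Suc i := x)"
  show ?case
  proof (intro exI[of _ f'] conjI allI impI)
    show "f' 0 = (q,j)" using f(1) unfolding f'_def by simp
  next
    fix t assume "t \<le> Suc i"
    then show "snd (f' t) = j - t" "st\<^sup>*\<^sup>* (f' t) d" using f(2) x unfolding f'_def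
      by (cases "t = Suc i"; auto)+
  next
    fix t assume t: "t < Suc i"
    show "(stg 0)\<^sup>*\<^sup>* (f' t) (f' (Suc t))"
    proof (cases "t = i")
      case True then show ?thesis using stg_mono[OF x(1)] unfolding f'_def by simp
    next
      case False then show ?thesis using f(3) t unfolding f'_def by auto
    qed
  qed
qed

lemma chain_comp: "\<forall>t<i. (stg 0)\<^sup>*\<^sup>* (f t) (f (Suc t)) \<Longrightarrow> t1 \<le> t2 \<Longrightarrow> t2 \<le> i \<Longrightarrow> (stg 0)\<^sup>*\<^sup>* (f t1) (f t2)"
proof (induction t2)
  case 0 then show ?case by simp
next
  case (Suc t2)
  show ?case
  proof (cases "t1 = Suc t2")
    case True then show ?thesis by simp
  next
    case False
    then have "(stg 0)\<^sup>*\<^sup>* (f t1) (f t2)" using Suc by auto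
    moreover have "(stg 0)\<^sup>*\<^sup>* (f t2) (f (Suc t2))" using Suc.prems by auto
    ultimately show ?thesis by (meson rtranclp_trans)
  qed
qed

lemma negall:
  assumes S: "BSCC Q \<gamma> W S" and q: "q \<in> S" and j: "card Q \<le> j" and z: "zr (q,j)" and c: "fst c \<in> S"
  shows "zr c"
proof -
  obtain q0 where d: "st\<^sup>*\<^sup>* (q,j) (q0,0)" using z unfolding zr_def by auto
  obtain f where f: "f 0 = (q,j)" "\<forall>t\<le>card Q. snd (f t) = j - t \<and> st\<^sup>*\<^sup>* (f t) (q0,0)"
      "\<forall>t<card Q. (stg 0)\<^sup>*\<^sup>* (f t) (f (Suc t))"
    using chain_ex[OF d _ j] by auto
  have SQ: "S \<subseteq> Q" using S unfolding BSCC_def by auto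
  have img: "(fst \<circ> f) ` {0..card Q} \<subseteq> S"
  proof
    fix v assume "v \<in> (fst \<circ> f) ` {0..card Q}"
    then obtain t where t: "t \<le> card Q" "v = fst (f t)" by auto
    have "(stg 0)\<^sup>*\<^sup>* (f 0) (f t)" using chain_comp[OF f(3), of 0 t] t by auto
    then have "st\<^sup>*\<^sup>* (q,j) (f t)" using stg_st f(1) by metis
    then show "v \<in> S" using bscc_steps[OF _ S] q t by auto
  qed
  have "\<not> inj_on (fst \<circ> f) {0..card Q}"
  proof
    assume "inj_on (fst \<circ> f) {0..card Q}"
    then have "card {0..card Q} \<le> card S" using card_inj_on_le[OF _ img] finQ SQ finite_subset by blast
    moreover have "card S \<le> card Q" using SQ finQ by (simp add: card_mono)
    ultimately show False by simp
  qed
  then obtain t1 t2 where tt: "t1 \<le> card Q" "t2 \<le> card Q" "t1 < t2" "fst (f t1) = fst (f t2)"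
    unfolding inj_on_def by (metis atLeastAtMost_iff comp_apply linorder_neqE_nat)
  define u where "u = fst (f t1)"
  have f1: "f t1 = (u, j - t1)" using f(2) tt unfolding u_def by (metis prod.collapse)
  have f2: "f t2 = (u, j - t2)" using f(2) tt unfolding u_def by (metis prod.collapse)
  have "(stg 0)\<^sup>*\<^sup>* (u, j - t1) (u, j - t2)" using chain_comp[OF f(3), of t1 t2] tt f1 f2 by auto
  moreover have "j - t2 < j - t1" using tt j by auto
  ultimately have zu: "\<And>x. zr (u,x)" using negcycle_zr by blast
  have uS: "u \<in> S" using img tt(1) unfolding u_def by auto
  have "(fst c, u) \<in> E\<^sup>*" using S c uS unfolding BSCC_def by auto
  from exec_ca[OF this, of "snd c"] show ?thesis
    using zu zr_back by (metis prod.collapse)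
qed


lemma z_post: "z \<in> post_star \<gamma> W {z}" unfolding post_star_def by auto

lemma recz_sub: "recz z \<Longrightarrow> post_star \<gamma> W {z} \<subseteq> pre_star \<gamma> W {z}"
  unfolding recz_def post_star_def pre_star_def by auto

lemma sub_recz: "post_star \<gamma> W {z} \<subseteq> pre_star \<gamma> W {z} \<Longrightarrow> recz z"
  unfolding recz_def post_star_def pre_star_def by auto

lemma regI_of: "recz z \<Longrightarrow> snd z = 0 \<Longrightarrow> finite (post_star \<gamma> W {z}) \<Longrightarrow> region_I \<gamma> W (fst z) = post_star \<gamma> W {z}"
  using recz_sub[of z] unfolding region_I_def by (metis prod.collapse)

lemma regII_of: "recz z \<Longrightarrow> snd z = 0 \<Longrightarrow> infinite (post_star \<gamma> W {z}) \<Longrightarrow> region_II \<gamma> W (fst z) = post_star \<gamma> W {z}"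
  using recz_sub[of z] unfolding region_II_def by (metis prod.collapse)

lemma regI_ne: "y \<in> region_I \<gamma> W s \<Longrightarrow> recz (s,0) \<and> finite (post_star \<gamma> W {(s,0)}) \<and> region_I \<gamma> W s = post_star \<gamma> W {(s,0)}"
  using sub_recz unfolding region_I_def by (auto split: if_splits)

lemma regII_ne: "y \<in> region_II \<gamma> W s \<Longrightarrow> recz (s,0) \<and> infinite (post_star \<gamma> W {(s,0)}) \<and> region_II \<gamma> W s = post_star \<gamma> W {(s,0)}"
  using sub_recz unfolding region_II_def by (auto split: if_splits)

lemma regI_bound: "y \<in> region_I \<gamma> W s \<Longrightarrow> s \<in> Q \<Longrightarrow> snd y < card Q"
proof -
  assume y: "y \<in> region_I \<gamma> W s" and sQ: "s \<in> Q"
  have h: "recz (s,0)" "finite (post_star \<gamma> W {(s,0)})" "region_I \<gamma> W s = post_star \<gamma> W {(s,0)}"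
    using regI_ne[OF y] by auto
  then have "st\<^sup>*\<^sup>* (s,0) y" using y unfolding post_star_def by auto
  then show ?thesis using rec_finite_bound[OF h(1) _ _ h(2)] sQ by auto
qed

lemma reachII:
  assumes S: "BSCC Q \<gamma> W S" and pre: "(q,j1) \<in> pre_star \<gamma> W (R_II \<gamma> W S)" and qQ: "q \<in> Q"
    and cong: "int j2 mod int (fact (card Q)) = int j1 mod int (fact (card Q))"
    and j2: "card Q * card Q + card Q \<le> j2"
  shows "\<exists>m < card Q * card Q. \<exists>c'. (st ^^ m) (q,j2) c' \<and> c' \<in> R_II \<gamma> W S"
proof -
  obtain y s where ys: "s \<in> S" "y \<in> region_II \<gamma> W s" "st\<^sup>*\<^sup>* (q,j1) y"
    using pre unfolding pre_star_def R_II_def by auto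
  have sQ: "s \<in> Q" using S ys(1) unfolding BSCC_def by auto
  note r = regII_ne[OF ys(2)]
  obtain y' where y': "st\<^sup>*\<^sup>* (s,0) y'" "snd y' \<ge> card Q" using infinite_high[of "(s,0)"] r sQ by auto
  obtain u a h where uah: "1 \<le> h" "a + h \<le> card Q" "st\<^sup>*\<^sup>* (s,0) (u,a)" "st\<^sup>*\<^sup>* (u,a) (u, a+h)"
    using uppump[of "(s,0)" y'] r y' sQ by auto
  have "st\<^sup>*\<^sup>* (s,0) y" using r ys(2) unfolding post_star_def by auto
  then have "st\<^sup>*\<^sup>* y (s,0)" using r unfolding recz_def by blast
  then have reach: "st\<^sup>*\<^sup>* (q,j1) (u,a)" using ys(3) uah(3) by (meson rtranclp_trans)
  have hd: "h dvd fact (card Q)" using uah(1,2) by (simp add: dvd_fact)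
  then have "int h dvd int (fact (card Q))" using int_dvd_int_iff by blast
  then have cong2: "int j2 mod int h = int j1 mod int h" using cong by (metis mod_mod_cancel)
  have hle: "card Q * h \<le> card Q * card Q" using uah(2) by simp
  then have "card Q * h \<le> j2" using j2 by linarith
  then obtain m x where mx: "m < card Q * h" "(st ^^ m) (q,j2) (u,x)" "int x mod int h = int a mod int h" "j2 \<le> x + m"
    using prod_reach[OF reach uah(1) qQ cong2] by blast
  have mle: "m < card Q * card Q" using mx(1) hle by linarith
  have "a \<le> x" using mx(4) mle j2 uah(2) by linarith
  have "x mod h = a mod h" using mx(3) by (metis of_nat_eq_iff zmod_int)
  then have "h dvd (x - a)" using \<open>a \<le> x\<close> by (simp add: mod_eq_dvd_iff_nat)
  then obtain r' where "x - a = h * r'" by (auto elim: dvdE)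
  then have xe: "x = a + r' * h" using \<open>a \<le> x\<close> by (simp add: mult.commute)
  have "st\<^sup>*\<^sup>* (s,0) (u,x)" using pump_iter[OF uah(4), of r'] uah(3) xe by (meson rtranclp_trans)
  then have "(u,x) \<in> R_II \<gamma> W S" using r ys(1) unfolding R_II_def post_star_def by auto
  then show ?thesis using mx(2) mle by blast
qed


lemma bottom_rec:
  assumes S: "BSCC Q \<gamma> W S" and allz: "\<forall>c. fst c \<in> S \<longrightarrow> zr c" and c: "fst c \<in> S"
  shows "\<exists>z. snd z = 0 \<and> st\<^sup>*\<^sup>* c z \<and> fst z \<in> S \<and> recz z"
proof -
  have SQ: "S \<subseteq> Q" using S unfolding BSCC_def by auto
  obtain z where z: "snd z = 0" "st\<^sup>*\<^sup>* c z" "\<forall>z'. snd z' = 0 \<longrightarrow> st\<^sup>*\<^sup>* z z' \<longrightarrow> st\<^sup>*\<^sup>* z' z"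
  proof -
    have "zr c" using allz c by blast
    have "fst c \<in> Q" using c SQ by blast
    from bottom[OF \<open>zr c\<close> this] show ?thesis using that by blast
  qed
  have zS: "fst z \<in> S" using bscc_steps[OF z(2) S c] .
  have "recz z" unfolding recz_def
  proof (intro allI impI)
    fix d assume d: "st\<^sup>*\<^sup>* z d"
    have "fst d \<in> S" using bscc_steps[OF d S zS] .
    then have "zr d" using allz by blast
    then obtain q' where "st\<^sup>*\<^sup>* d (q',0)" unfolding zr_def by blast
    moreover have "st\<^sup>*\<^sup>* (q',0) z" using z(3) d calculation by (meson rtranclp_trans snd_conv)
    ultimately show "st\<^sup>*\<^sup>* d z" by (meson rtranclp_trans)
  qed
  then show ?thesis using z zS by blast
qed

lemma highS:
  assumes S: "BSCC Q \<gamma> W S" and q: "q \<in> S" and j: "card Q * card Q + card Q \<le> j"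
  shows "\<exists>m < card Q * card Q. \<exists>c'. (st ^^ m) (q,j) c' \<and> (\<exists>R. is_region Q \<gamma> W R \<and> c' \<in> R)"
proof -
  have SQ: "S \<subseteq> Q" using S unfolding BSCC_def by auto
  have qQ: "q \<in> Q" using SQ q by auto
  have n0: "card Q > 0" using qQ finQ card_gt_0_iff by blast
  then have n1: "0 < card Q * card Q" by simp
  have jn: "card Q \<le> j" using j by simp
  show ?thesis
  proof (cases "zr (q,j)")
    case False
    have "(q,j) \<in> region_III \<gamma> W S" using False q jn n0 unfolding region_III_def zr_def by auto
    moreover have "is_region Q \<gamma> W (region_III \<gamma> W S)" unfolding is_region_def using S by blast
    ultimately show ?thesis using n1 by (intro exI[of _ 0]) auto
  next
    case True
    have allz: "\<forall>c. fst c \<in> S \<longrightarrow> zr c" using negall[OF S q jn True] by blast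
    show ?thesis
    proof (cases "(q,j) \<in> pre_star \<gamma> W (R_II \<gamma> W S)")
      case True
      obtain m c' where mc: "m < card Q * card Q" "(st ^^ m) (q,j) c'" "c' \<in> R_II \<gamma> W S"
        using reachII[OF S True qQ _ j] by blast
      then obtain s where "s \<in> S" "c' \<in> region_II \<gamma> W s" unfolding R_II_def by auto
      moreover have "is_region Q \<gamma> W (region_II \<gamma> W s)" unfolding is_region_def using S calculation(1) by blast
      ultimately show ?thesis using mc by blast
    next
      case notII: False
      define F where "F = (fact (card Q) :: nat)"
      have F0: "F > 0" unfolding F_def by simp
      define C where "C t = (q, j + t * F)" for t
      have nII: "C t \<notin> pre_star \<gamma> W (R_II \<gamma> W S)" for t
      proof
        assume "C t \<in> pre_star \<gamma> W (R_II \<gamma> W S)"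
        then have "(q, j + t*F) \<in> pre_star \<gamma> W (R_II \<gamma> W S)" unfolding C_def by simp
        moreover have "int j mod int (fact (card Q)) = int (j + t*F) mod int (fact (card Q))"
          unfolding F_def by (simp add: of_nat_mult)
        ultimately obtain m c' where "(st ^^ m) (q,j) c'" "c' \<in> R_II \<gamma> W S"
          using reachII[OF S _ qQ _ j] by blast
        then have "st\<^sup>*\<^sup>* (q,j) c'" using relpowp_imp_rtranclp by metis
        then have "(q,j) \<in> pre_star \<gamma> W (R_II \<gamma> W S)" unfolding pre_star_def using \<open>c' \<in> R_II \<gamma> W S\<close> by blast
        then show False using notII by blast
      qed
      have inD: "C t \<in> D_set \<gamma> W S" for t
      proof -
        obtain z where z: "snd z = 0" "st\<^sup>*\<^sup>* (C t) z" "fst z \<in> S" "recz z"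
          using bottom_rec[OF S allz, of "C t"] q unfolding C_def by auto
        have "finite (post_star \<gamma> W {z})"
        proof (rule ccontr)
          assume inf: "infinite (post_star \<gamma> W {z})"
          have "z \<in> region_II \<gamma> W (fst z)" using regII_of[OF z(4) z(1) inf] z_post[of z] by simp
          then have "z \<in> R_II \<gamma> W S" using z(3) unfolding R_II_def by blast
          then show False using nII[of t] z(2) unfolding pre_star_def by auto
        qed
        then have "z \<in> region_I \<gamma> W (fst z)" using regI_of[OF z(4) z(1)] z_post[of z] by simp
        then have "z \<in> R_I \<gamma> W S" using z(3) unfolding R_I_def by blast
        then have "C t \<in> pre_star \<gamma> W (R_I \<gamma> W S)" using z(2) unfolding pre_star_def by auto
        moreover have "C t \<notin> R_I \<gamma> W S"
        proof
          assume "C t \<in> R_I \<gamma> W S"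
          then obtain s where "s \<in> S" "C t \<in> region_I \<gamma> W s" unfolding R_I_def by auto
          then have "snd (C t) < card Q" using regI_bound[of "C t" s] SQ by auto
          then show False using jn unfolding C_def by auto
        qed
        moreover have "C t \<in> S \<times> UNIV" using q unfolding C_def by auto
        ultimately show ?thesis using nII[of t] unfolding D_set_def by auto
      qed
      have "inj C" unfolding C_def inj_def using F0 by auto
      then have "infinite (D_set \<gamma> W S)" using inD
        by (meson finite_imageD finite_subset image_subsetI infinite_UNIV_nat)
      then have "region_IV \<gamma> W S = D_set \<gamma> W S" unfolding region_IV_def by auto
      moreover have "(q,j) \<in> D_set \<gamma> W S" using inD[of 0] unfolding C_def by simp
      moreover have "is_region Q \<gamma> W (region_IV \<gamma> W S)" unfolding is_region_def using S by blast
      ultimately show ?thesis using n1 by (intro exI[of _ 0]) auto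
    qed
  qed
qed


lemma high:
  assumes q0: "q0 \<in> Q" and j0: "card Q * card Q + 2 * card Q \<le> j0"
  shows "\<exists>m < card Q * card Q + card Q. \<exists>c'. (st ^^ m) (q0,j0) c' \<and> (\<exists>R. is_region Q \<gamma> W R \<and> c' \<in> R)"
proof -
  obtain S q m1 where S: "BSCC Q \<gamma> W S" "q \<in> S" "m1 < card Q" "((\<lambda>a b. (a,b) \<in> E) ^^ m1) q0 q"
    using bscc_short[OF q0] by blast
  obtain k' where k': "(st ^^ m1) (q0,j0) (q,k')" "j0 \<le> k' + m1"
    using lift_ca[OF S(4), of j0] S(3) j0 by fastforce
  have "card Q * card Q + card Q \<le> k'" using k'(2) S(3) j0 by linarith
  then obtain m2 c' where m2: "m2 < card Q * card Q" "(st ^^ m2) (q,k') c'" "\<exists>R. is_region Q \<gamma> W R \<and> c' \<in> R"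
    using highS[OF S(1,2)] by blast
  have "(st ^^ (m1 + m2)) (q0,j0) c'" using k'(1) m2(2) by (rule relpowp_trans)
  moreover have "m1 + m2 < card Q * card Q + card Q" using S(3) m2(1) by linarith
  ultimately show ?thesis using m2(3) by blast
qed

lemma reach3:
  assumes "\<not> zr c" "fst c \<in> Q"
  shows "\<exists>c'. st\<^sup>*\<^sup>* c c' \<and> (\<exists>R. is_region Q \<gamma> W R \<and> c' \<in> R)"
proof -
  obtain S q where S: "BSCC Q \<gamma> W S" "q \<in> S" "(fst c, q) \<in> E\<^sup>*" using bscc_exists[OF assms(2)] by blast
  from exec_ca[OF S(3), of "snd c"] obtain k' where k': "st\<^sup>*\<^sup>* c (q,k')"
    using assms(1) by auto
  have nz: "\<not> zr (q,k')" using zr_back[OF k'] assms(1) by blast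
  then have "k' \<ge> 1" using zr_zero by (metis less_one not_le)
  then have "(q,k') \<in> region_III \<gamma> W S" using nz S(2) unfolding region_III_def zr_def by auto
  moreover have "is_region Q \<gamma> W (region_III \<gamma> W S)" unfolding is_region_def using S(1) by blast
  ultimately show ?thesis using k' by blast
qed

lemma qual:
  assumes cQ: "fst c \<in> Q"
  shows "\<exists>c'. st\<^sup>*\<^sup>* c c' \<and> (\<exists>R. is_region Q \<gamma> W R \<and> c' \<in> R)"
proof (cases "zr c")
  case False then show ?thesis using reach3 cQ by blast
next
  case True
  obtain z where z: "snd z = 0" "st\<^sup>*\<^sup>* c z" "\<forall>z'. snd z' = 0 \<longrightarrow> st\<^sup>*\<^sup>* z z' \<longrightarrow> st\<^sup>*\<^sup>* z' z"
    using bottom[OF True cQ] by blast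
  have zQ: "fst z \<in> Q" using steps_Q[OF z(2) cQ] .
  show ?thesis
  proof (cases "recz z")
    case True
    show ?thesis
    proof (cases "finite (post_star \<gamma> W {z})")
      case True
      have "z \<in> region_I \<gamma> W (fst z)" using regI_of[OF \<open>recz z\<close> z(1) True] z_post[of z] by simp
      moreover have "is_region Q \<gamma> W (region_I \<gamma> W (fst z))" unfolding is_region_def using zQ by blast
      ultimately show ?thesis using z(2) by blast
    next
      case False
      obtain y where y: "st\<^sup>*\<^sup>* z y" "snd y \<ge> card Q" using infinite_high[OF False zQ] by blast
      have yQ: "fst y \<in> Q" using steps_Q[OF y(1) zQ] .
      obtain S q m1 where S: "BSCC Q \<gamma> W S" "q \<in> S" "m1 < card Q" "((\<lambda>a b. (a,b) \<in> E) ^^ m1) (fst y) q"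
        using bscc_short[OF yQ] by blast
      obtain k' where k': "(st ^^ m1) (fst y, snd y) (q,k')"
        using lift_ca[OF S(4), of "snd y"] S(3) y(2) by fastforce
      then have "st\<^sup>*\<^sup>* y (q,k')" using relpowp_imp_rtranclp by (metis prod.collapse)
      then have "st\<^sup>*\<^sup>* (q,k') z" using \<open>recz z\<close> y(1) unfolding recz_def by (meson rtranclp_trans)
      then have zS: "fst z \<in> S" using bscc_steps[OF _ S(1)] S(2) by (metis fst_conv)
      have "z \<in> region_II \<gamma> W (fst z)" using regII_of[OF \<open>recz z\<close> z(1) False] z_post[of z] by simp
      moreover have "is_region Q \<gamma> W (region_II \<gamma> W (fst z))" unfolding is_region_def using S(1) zS by blast
      ultimately show ?thesis using z(2) by blast
    qed
  next
    case False
    then obtain d where d: "st\<^sup>*\<^sup>* z d" "\<not> st\<^sup>*\<^sup>* d z" unfolding recz_def by blast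
    have "\<not> zr d"
    proof
      assume "zr d"
      then obtain q' where q': "st\<^sup>*\<^sup>* d (q',0)" unfolding zr_def by blast
      then have "st\<^sup>*\<^sup>* (q',0) z" using z(3) d(1) by (meson rtranclp_trans snd_conv)
      then show False using q' d(2) by (meson rtranclp_trans)
    qed
    moreover have "fst d \<in> Q" using steps_Q[OF d(1) zQ] .
    ultimately obtain c' where "st\<^sup>*\<^sup>* d c'" "\<exists>R. is_region Q \<gamma> W R \<and> c' \<in> R" using reach3 by blast
    then show ?thesis using z(2) d(1) by (meson rtranclp_trans)
  qed
qed

definition sw :: "nat \<Rightarrow> 'q conf \<Rightarrow> 'q conf \<Rightarrow> bool" where
  "sw H a b \<longleftrightarrow> st a b \<and> snd a < H"

lemma window: "st\<^sup>*\<^sup>* c y \<Longrightarrow> \<exists>w. (sw H)\<^sup>*\<^sup>* c w \<and> (w = y \<or> snd w \<ge> H)"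
proof (induction rule: converse_rtranclp_induct)
  case base then show ?case by blast
next
  case (step a b)
  show ?case
  proof (cases "snd a \<ge> H")
    case True then show ?thesis by blast
  next
    case False
    then have "sw H a b" using step(1) unfolding sw_def by auto
    obtain w where "(sw H)\<^sup>*\<^sup>* b w" "w = y \<or> snd w \<ge> H" using step(3) by blast
    moreover have "(sw H)\<^sup>*\<^sup>* a w" using \<open>sw H a b\<close> calculation(1) by (rule converse_rtranclp_into_rtranclp)
    ultimately show ?thesis by blast
  qed
qed

lemma bound_arith: "(n::nat) \<ge> 1 \<Longrightarrow> n * (n * n + 2 * n + 1) + (n * n + n) \<le> 11 * n ^ 4"
proof -
  assume n: "n \<ge> 1"
  have e: "n ^ 4 = n * n * n * n" by (simp add: power4_eq_xxxx)
  have c: "n * n * n * 1 \<le> n * n * n * n" using n by (rule mult_le_mono2)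
  have b: "n * n * 1 \<le> n * n * n" using n by (rule mult_le_mono2)
  have a: "n * 1 \<le> n * n" using n by (rule mult_le_mono2)
  have "n * (n * n + 2 * n + 1) + (n * n + n) = n*n*n + 3*(n*n) + 2*n" by (simp add: algebra_simps)
  then show ?thesis using a b c e by linarith
qed

lemma main_loc:
  assumes p: "p \<in> Q"
  shows "\<exists>m \<le> 11 * card Q ^ 4. \<exists>c'. (st ^^ m) (p,k) c' \<and> (\<exists>R. is_region Q \<gamma> W R \<and> c' \<in> R)"
proof -
  define n where "n = card Q"
  have n1: "n \<ge> 1" using p finQ unfolding n_def by (metis One_nat_def Suc_leI card_gt_0_iff empty_iff)
  define H where "H = n * n + 2 * n"
  have bnd: "n * (H + 1) + (n * n + n) \<le> 11 * n ^ 4" using bound_arith[OF n1] unfolding H_def by simp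
  show ?thesis
  proof (cases "H \<le> k")
    case True
    then obtain m c' where "m < n * n + n" "(st ^^ m) (p,k) c'" "\<exists>R. is_region Q \<gamma> W R \<and> c' \<in> R"
      using high[OF p, of k] unfolding H_def n_def by blast
    moreover have "n * n + n \<le> 11 * n ^ 4" using bnd by linarith
    ultimately have "m \<le> 11 * card Q ^ 4" "(st ^^ m) (p,k) c'" "\<exists>R. is_region Q \<gamma> W R \<and> c' \<in> R"
      unfolding n_def by auto
    then show ?thesis by blast
  next
    case False
    obtain y where y: "st\<^sup>*\<^sup>* (p,k) y" "\<exists>R. is_region Q \<gamma> W R \<and> y \<in> R" using qual[of "(p,k)"] p by auto
    obtain w where w: "(sw H)\<^sup>*\<^sup>* (p,k) w" "w = y \<or> snd w \<ge> H" using window[OF y(1)] by blast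
    define X where "X = Q \<times> {0..H}"
    have fX: "finite X" unfolding X_def using finQ by auto
    have cX: "card X = n * (H + 1)" unfolding X_def n_def by (simp add: card_cartesian_product)
    have inX: "\<forall>z. (sw H)\<^sup>*\<^sup>* (p,k) z \<longrightarrow> z \<in> X"
    proof (intro allI impI)
      fix z assume "(sw H)\<^sup>*\<^sup>* (p,k) z"
      then show "z \<in> X"
      proof (induction rule: rtranclp_induct)
        case base then show ?case using p False unfolding X_def by auto
      next
        case (step a b)
        have "st a b" "snd a < H" using step(2) unfolding sw_def by auto
        then have "snd b \<le> H" "fst b \<in> Q" using step_props[of a b] step(3) unfolding X_def by (auto simp: mem_Times_iff)
        then show ?case unfolding X_def by (simp add: mem_Times_iff)
      qed
    qed
    obtain m0 where m0: "m0 < n * (H + 1)" "((sw H) ^^ m0) (p,k) w" using short_path_rt[OF w(1) fX inX] cX by auto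
    have m0st: "(st ^^ m0) (p,k) w" using relpowp_mono[of "sw H" st, OF _ m0(2)] unfolding sw_def by blast
    show ?thesis
    proof (cases "w = y")
      case True
      have "m0 \<le> 11 * card Q ^ 4" using m0(1) bnd unfolding n_def by linarith
      then show ?thesis using m0st y(2) True by blast
    next
      case False
      then have wH: "snd w \<ge> H" using w(2) by auto
      have wQ: "fst w \<in> Q" using steps_Q[OF relpowp_imp_rtranclp[OF m0st]] p by simp
      obtain m2 c' where m2: "m2 < n * n + n" "(st ^^ m2) (fst w, snd w) c'" "\<exists>R. is_region Q \<gamma> W R \<and> c' \<in> R"
        using high[OF wQ, of "snd w"] wH unfolding H_def n_def by blast
      have "(st ^^ (m0 + m2)) (p,k) c'" using m0st m2(2) by (metis prod.collapse relpowp_trans)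
      moreover have "m0 + m2 \<le> 11 * n ^ 4" using m0(1) m2(1) bnd by linarith
      ultimately show ?thesis using m2(3) unfolding n_def by blast
    qed
  qed
qed

end

theorem lemma1:
  fixes Q :: "'q set" and \<gamma> :: "'q rule set" and W :: "'q rule \<Rightarrow> nat"
  assumes "pVASS1 Q \<gamma> W"
  shows "\<forall>p\<in>Q. \<forall>k::nat. \<exists>m \<le> 11 * card Q ^ 4. \<exists>c'.
           ((MA_step \<gamma> W) ^^ m) (p, k) c' \<and> (\<exists>R. is_region Q \<gamma> W R \<and> c' \<in> R)"
proof (intro ballI allI)
  interpret pv Q \<gamma> W using assms by unfold_locales
  fix p k assume "p \<in> Q"
  then show "\<exists>m \<le> 11 * card Q ^ 4. \<exists>c'. ((MA_step \<gamma> W) ^^ m) (p, k) c' \<and> (\<exists>R. is_region Q \<gamma> W R \<and> c' \<in> R)"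
    by (rule main_loc)
qed

end
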